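(* Let $G$ be a simple, undirected, locally finite graph and $i\sim j$ an edge such that $\sharp_\square^i(i,j)\neq\emptyset$. Then $$\sharp_\square^{\mathfrak m}(i,j)\ \ge\ \frac{\max\{|\sharp_\square^i(i,j)|,\,|\sharp_\square^j(i,j)|\}}{\gamma_{\max}(i,j)}.$$
   Context: $S_1(v)$ denotes the set of neighbours of $v$. For an edge $i\sim j$: $\sharp_\square^i(i,j)=\{k\in S_1(i)\setminus (S_1(j)\cup\{j\}) : \exists\, w\in (S_1(k)\cap S_1(j))\setminus (S_1(i)\cup\{i\})\}$, and $\sharp_\square^j(i,j)$ is defined symmetrically with the roles of $i$ and $j$ exchanged (these are the neighbours of $i$, resp. $j$, lying on a 4-cycle $i\sim k\sim w\sim j\sim i$ with no diagonal). Note $\sharp_\square^i\ne\emptyset$ iff $\sharp_\square^j\neq\emptyset$. $\gamma_{\max}(i,j)=\max\big\{\max_{k\in\sharp_\square^i}|(S_1(k)\cap S_1(j))\setminus(S_1(i)\cup\{i\})|,\ \max_{w\in\sharp_\square^j}|(S_1(w)\cap S_1(i))\setminus(S_1(j)\cup\{j\})|\big\}$. For $U\subset V$, $\mathcal D(U)$ is the set of injective maps $\varphi:U\to V$ with $z\sim\varphi(z)$ for all $z\in U$, and $\sharp_\square^{\mathfrak m}(i,j)=\max\{|U|: U\subset\sharp_\square^i,\ \exists\varphi\in\mathcal D(U)\text{ with }\varphi(U)\subset\sharp_\square^j\}$. *)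

theory Defs
  imports Complex_Main
begin

definition simple_graph :: "('a \<Rightarrow> 'a \<Rightarrow> bool) \<Rightarrow> bool" where
  "simple_graph E \<longleftrightarrow> (\<forall>x y. E x y \<longrightarrow> E y x) \<and> (\<forall>x. \<not> E x x)"

definition locally_finite :: "('a \<Rightarrow> 'a \<Rightarrow> bool) \<Rightarrow> bool" where
  "locally_finite E \<longleftrightarrow> (\<forall>x. finite {y. E x y})"

definition S1 :: "('a \<Rightarrow> 'a \<Rightarrow> bool) \<Rightarrow> 'a \<Rightarrow> 'a set" where
  "S1 E v = {y. E v y}"

text \<open>sq_i E i j = \<sharp>_\<box>^i(i,j); the symmetric one is sq_i E j i.\<close>
definition sq_i :: "('a \<Rightarrow> 'a \<Rightarrow> bool) \<Rightarrow> 'a \<Rightarrow> 'a \<Rightarrow> 'a set" where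
  "sq_i E i j = {k \<in> S1 E i - (S1 E j \<union> {j}).
                   \<exists>w. w \<in> (S1 E k \<inter> S1 E j) - (S1 E i \<union> {i})}"

definition gamma_max :: "('a \<Rightarrow> 'a \<Rightarrow> bool) \<Rightarrow> 'a \<Rightarrow> 'a \<Rightarrow> nat" where
  "gamma_max E i j = max
     (Max ((\<lambda>k. card ((S1 E k \<inter> S1 E j) - (S1 E i \<union> {i}))) ` sq_i E i j))
     (Max ((\<lambda>w. card ((S1 E w \<inter> S1 E i) - (S1 E j \<union> {j}))) ` sq_i E j i))"

definition D_maps :: "('a \<Rightarrow> 'a \<Rightarrow> bool) \<Rightarrow> 'a set \<Rightarrow> ('a \<Rightarrow> 'a) set" where
  "D_maps E U = {\<phi>. inj_on \<phi> U \<and> (\<forall>z\<in>U. E z (\<phi> z))}"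

definition sq_m :: "('a \<Rightarrow> 'a \<Rightarrow> bool) \<Rightarrow> 'a \<Rightarrow> 'a \<Rightarrow> nat" where
  "sq_m E i j = Max {card U | U. U \<subseteq> sq_i E i j \<and>
                    (\<exists>\<phi>\<in>D_maps E U. \<phi> ` U \<subseteq> sq_i E j i)}"

end

theory Submission
  imports Defs
begin

lemma greedy_match:
  fixes R :: "'a \<Rightarrow> 'b \<Rightarrow> bool"
  assumes "finite A"
  shows "(\<forall>a\<in>A. \<exists>b\<in>B. R a b) \<Longrightarrow> (\<forall>b\<in>B. card {a\<in>A. R a b} \<le> g) \<Longrightarrow>
    \<exists>U \<phi>. U \<subseteq> A \<and> inj_on \<phi> U \<and> \<phi> ` U \<subseteq> B \<and> (\<forall>z\<in>U. R z (\<phi> z)) \<and> card A \<le> g * card U"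
  using assms
proof (induction A arbitrary: B rule: finite_psubset_induct)
  case (psubset A)
  show ?case
  proof (cases "A = {}")
    case True
    then show ?thesis by (intro exI[of _ "{}"]) auto
  next
    case False
    then obtain a where a: "a \<in> A" by auto
    then obtain b where b: "b \<in> B" "R a b" using psubset.prems by auto
    define A' where "A' = A - {x\<in>A. R x b}"
    have sub: "A' \<subset> A" using a b unfolding A'_def by auto
    have h1: "\<forall>x\<in>A'. \<exists>y\<in>B - {b}. R x y"
      using psubset.prems(1) unfolding A'_def by fastforce
    have h2: "\<forall>y\<in>B - {b}. card {x\<in>A'. R x y} \<le> g"
    proof
      fix y assume y: "y \<in> B - {b}"
      have "card {x\<in>A'. R x y} \<le> card {x\<in>A. R x y}"
        by (rule card_mono) (use psubset.hyps in \<open>auto simp: A'_def\<close>)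
      also have "\<dots> \<le> g" using psubset.prems(2) y by auto
      finally show "card {x\<in>A'. R x y} \<le> g" .
    qed
    obtain U \<phi> where U: "U \<subseteq> A'" "inj_on \<phi> U" "\<phi> ` U \<subseteq> B - {b}"
      "\<forall>z\<in>U. R z (\<phi> z)" "card A' \<le> g * card U"
      using psubset.IH[OF sub h1 h2] sub psubset.hyps by (meson finite_subset psubset_imp_subset)
    have aU: "a \<notin> U" using U(1) b unfolding A'_def by auto
    have finU: "finite U" using U(1) psubset.hyps sub by (meson finite_subset psubset_imp_subset)
    have "card A = card A' + card {x\<in>A. R x b}"
    proof -
      have "A = A' \<union> {x\<in>A. R x b}" unfolding A'_def by auto
      moreover have "A' \<inter> {x\<in>A. R x b} = {}" unfolding A'_def by auto
      ultimately show ?thesis using psubset.hyps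
        by (metis (no_types, lifting) card_Un_disjoint finite_Un)
    qed
    also have "\<dots> \<le> g * card U + g" using U(5) psubset.prems(2) b by (intro add_mono) auto
    also have "\<dots> = g * card (insert a U)" using aU finU by simp
    finally have c: "card A \<le> g * card (insert a U)" .
    show ?thesis
    proof (intro exI[of _ "insert a U"] exI[of _ "\<phi>(a := b)"] conjI)
      show "insert a U \<subseteq> A" using a U(1) sub by auto
      show "inj_on (\<phi>(a := b)) (insert a U)"
        using U(2,3) aU by (auto simp: inj_on_def image_subset_iff)
      show "(\<phi>(a := b)) ` insert a U \<subseteq> B" using U(3) aU b by auto
      show "\<forall>z\<in>insert a U. R z ((\<phi>(a := b)) z)" using U(4) aU b by auto
    qed (use c in auto)
  qed
qed

theorem mainTheorem3:
  fixes E :: "'a \<Rightarrow> 'a \<Rightarrow> bool" and i j :: 'a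
  assumes "simple_graph E" and "locally_finite E"
    and "E i j" and "sq_i E i j \<noteq> {}"
  shows "real (sq_m E i j) \<ge>
           real (max (card (sq_i E i j)) (card (sq_i E j i))) / real (gamma_max E i j)"
proof -
  define A where "A = sq_i E i j"
  define B where "B = sq_i E j i"
  have sym: "\<And>x y. E x y \<Longrightarrow> E y x" using assms(1) unfolding simple_graph_def by auto
  have finA: "finite A"
  proof (rule finite_subset[of _ "{y. E i y}"])
    show "finite {y. E i y}" using assms(2) unfolding locally_finite_def by auto
  qed (auto simp: A_def sq_i_def S1_def)
  have finB: "finite B"
  proof (rule finite_subset[of _ "{y. E j y}"])
    show "finite {y. E j y}" using assms(2) unfolding locally_finite_def by auto
  qed (auto simp: B_def sq_i_def S1_def)
  have NA: "\<And>k. k \<in> A \<Longrightarrow> (S1 E k \<inter> S1 E j) - (S1 E i \<union> {i}) = {w\<in>B. E k w}"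
    unfolding A_def B_def sq_i_def S1_def using sym by auto
  have NB: "\<And>w. w \<in> B \<Longrightarrow> (S1 E w \<inter> S1 E i) - (S1 E j \<union> {j}) = {k\<in>A. E w k}"
    unfolding A_def B_def sq_i_def S1_def using sym by auto
  define g where "g = gamma_max E i j"
  have gA: "\<And>k. k \<in> A \<Longrightarrow> card {w\<in>B. E k w} \<le> g"
  proof -
    fix k assume k: "k \<in> A"
    have "card {w\<in>B. E k w} \<in> (\<lambda>k. card ((S1 E k \<inter> S1 E j) - (S1 E i \<union> {i}))) ` A"
      by (rule image_eqI[of _ _ k]) (use NA[OF k] k in simp_all)
    hence "card {w\<in>B. E k w} \<le> Max ((\<lambda>k. card ((S1 E k \<inter> S1 E j) - (S1 E i \<union> {i}))) ` A)"
      using finA by auto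
    thus "card {w\<in>B. E k w} \<le> g" unfolding g_def gamma_max_def A_def B_def by auto
  qed
  have gB: "\<And>w. w \<in> B \<Longrightarrow> card {k\<in>A. E w k} \<le> g"
  proof -
    fix k assume k: "k \<in> B"
    have "card {w\<in>A. E k w} \<in> (\<lambda>w. card ((S1 E w \<inter> S1 E i) - (S1 E j \<union> {j}))) ` B"
      by (rule image_eqI[of _ _ k]) (use NB[OF k] k in simp_all)
    hence "card {w\<in>A. E k w} \<le> Max ((\<lambda>w. card ((S1 E w \<inter> S1 E i) - (S1 E j \<union> {j}))) ` B)"
      using finB by auto
    thus "card {w\<in>A. E k w} \<le> g" unfolding g_def gamma_max_def A_def B_def by auto
  qed
  have exA: "\<forall>a\<in>A. \<exists>b\<in>B. E a b" using NA unfolding A_def sq_i_def by blast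
  have exB: "\<forall>b\<in>B. \<exists>a\<in>A. E b a" using NB unfolding B_def sq_i_def by blast
  define S where "S = {card U | U. U \<subseteq> A \<and> (\<exists>\<phi>\<in>D_maps E U. \<phi> ` U \<subseteq> B)}"
  have m: "sq_m E i j = Max S" unfolding sq_m_def S_def A_def B_def by simp
  have finS: "finite S"
  proof (rule finite_subset[of _ "{..card A}"])
    show "S \<subseteq> {..card A}" unfolding S_def using finA card_mono by fastforce
  qed auto
  obtain U \<phi> where U: "U \<subseteq> A" "inj_on \<phi> U" "\<phi> ` U \<subseteq> B" "\<forall>z\<in>U. E z (\<phi> z)" "card A \<le> g * card U"
    proof -
    have "\<forall>b\<in>B. card {a\<in>A. E a b} \<le> g"
    proof
      fix b assume b: "b \<in> B"
      have "{a\<in>A. E a b} = {a\<in>A. E b a}" using sym by blast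
      thus "card {a\<in>A. E a b} \<le> g" using gB[OF b] by simp
    qed
    thus ?thesis using greedy_match[OF finA exA, of g] that by blast
  qed
  have c1: "card A \<le> g * Max S"
  proof -
    have "card U \<in> S" unfolding S_def D_maps_def using U by blast
    hence "card U \<le> Max S" using finS by auto
    thus ?thesis using U(5) by (meson le_trans mult_le_mono2)
  qed
  obtain V \<psi> where V: "V \<subseteq> B" "inj_on \<psi> V" "\<psi> ` V \<subseteq> A" "\<forall>z\<in>V. E z (\<psi> z)" "card B \<le> g * card V"
    proof -
    have "\<forall>b\<in>A. card {a\<in>B. E a b} \<le> g"
    proof
      fix b assume b: "b \<in> A"
      have "{a\<in>B. E a b} = {a\<in>B. E b a}" using sym by blast
      thus "card {a\<in>B. E a b} \<le> g" using gA[OF b] by simp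
    qed
    thus ?thesis using greedy_match[OF finB exB, of g] that by blast
  qed
  have c2: "card B \<le> g * Max S"
  proof -
    have w1: "inv_into V \<psi> \<in> D_maps E (\<psi> ` V)"
      unfolding D_maps_def using V(2,4) sym by (auto simp: inj_on_inv_into)
    have w2: "inv_into V \<psi> ` \<psi> ` V \<subseteq> B" using V(1,2) by simp
    have "card (\<psi> ` V) \<in> S" unfolding S_def using V(3) w1 w2 by blast
    moreover have "card (\<psi> ` V) = card V" using V(2) card_image by blast
    ultimately have "card V \<le> Max S" using finS by auto
    thus ?thesis using V(5) by (meson le_trans mult_le_mono2)
  qed
  have gpos: "g > 0"
  proof -
    obtain k where "k \<in> A" using assms(4) A_def by auto
    then obtain w where "w \<in> B" "E k w" using exA by auto
    hence "card {w\<in>B. E k w} > 0" using finB by (auto simp: card_gt_0_iff)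
    thus ?thesis using gA[OF \<open>k\<in>A\<close>] by linarith
  qed
  have "max (card A) (card B) \<le> g * Max S" using c1 c2 by simp
  hence "real (max (card A) (card B)) \<le> real g * real (Max S)" by (simp only: of_nat_mult[symmetric] of_nat_le_iff)
  hence "real (max (card A) (card B)) / real g \<le> real (Max S)" using gpos
    by (simp add: divide_le_eq mult.commute)
  thus ?thesis unfolding m[symmetric] g_def A_def B_def .
qed

end
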